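(* Let $0<\alpha<d$ and let $f,g:\mathbb{Z}^d\to\mathbb{R}$ satisfy $f(x)\sim A|x|^{-\alpha}$ as $|x|\to\infty$ for some $A>0$, $\sum_x|g(x)|=K$ and $|g(x)|\le K|x|^{-d}$ for all $x\neq0$, with $K>0$. Then $(f*g)(x)\sim A\big(\sum_yg(y)\big)|x|^{-\alpha}$ as $|x|\to\infty$.
   Context: $(f*g)(x)=\sum_yf(x-y)g(y)$; $a(x)\sim b(x)$ means $a(x)/b(x)\to1$ (for the conclusion, interpreted as $|x|^\alpha(f*g)(x)\to A\sum_yg(y)$). *)

theory Defs
  imports "HOL-Analysis.Analysis" "HOL-Library.Landau_Symbols"
begin

text \<open>Lattice points of Z^d are modelled as int ^ 'd (d = CARD('d)).
  The Euclidean norm |x| of a lattice point:\<close>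
definition lnorm :: "int ^ 'd::finite \<Rightarrow> real" where
  "lnorm x = norm (\<chi> i. real_of_int (x $ i))"

definition lconv :: "(int ^ 'd::finite \<Rightarrow> real) \<Rightarrow> (int ^ 'd \<Rightarrow> real) \<Rightarrow> int ^ 'd \<Rightarrow> real" where
  "lconv f g x = (\<Sum>\<^sub>\<infinity>y. f (x - y) * g y)"

definition at_infty_lat :: "(int ^ 'd::finite) filter" where
  "at_infty_lat = filtercomap lnorm at_top"

end

theory Submission
  imports Defs
begin

definition emb :: "int ^ 'd::finite \<Rightarrow> real ^ 'd" where
  "emb x = (\<chi> i. real_of_int (x $ i))"

lemma lnorm_emb: "lnorm x = norm (emb x)"
  by (simp add: lnorm_def emb_def)

lemma emb_diff: "emb (x - y) = emb x - emb y"
  by (simp add: emb_def vec_eq_iff)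

lemma emb_eq0: "emb x = 0 \<longleftrightarrow> x = 0"
  by (simp add: emb_def vec_eq_iff)

lemma lnorm_nonneg: "0 \<le> lnorm x"
  by (simp add: lnorm_emb)

lemma lnorm_diff_ge: "lnorm x - lnorm y \<le> lnorm (x - y)"
  unfolding lnorm_emb emb_diff by (rule norm_triangle_ineq2)

lemma lnorm_diff_le: "lnorm (x - y) \<le> lnorm x + lnorm y"
  unfolding lnorm_emb emb_diff by (rule norm_triangle_ineq4)

lemma lnorm_sym: "lnorm (x - y) = lnorm (y - x)"
  unfolding lnorm_emb emb_diff by (rule norm_minus_commute)

lemma lnorm_comp: "\<bar>x $ i\<bar> \<le> lnorm x"
proof -
  have "\<bar>emb x $ i\<bar> \<le> norm (emb x)" by (rule component_le_norm_cart)
  thus ?thesis by (simp add: emb_def lnorm_emb)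
qed

lemma lnorm_ge1: assumes "x \<noteq> 0" shows "1 \<le> lnorm x"
proof -
  obtain i where "x $ i \<noteq> 0" using assms by (auto simp: vec_eq_iff)
  hence "1 \<le> \<bar>x $ i\<bar>" by linarith
  hence "(1::real) \<le> \<bar>real_of_int (x $ i)\<bar>" by linarith
  thus ?thesis using lnorm_comp[of x i] by linarith
qed

lemma lnorm_zero[simp]: "lnorm (0 :: int ^ 'd::finite) = 0"
  by (simp add: lnorm_emb emb_def vec_eq_iff zero_vec_def)

lemma box_card: "card {z :: int ^ 'd::finite. \<forall>i. \<bar>z $ i\<bar> \<le> n} = nat (2*n+1) ^ CARD('d)"
  and box_finite: "finite {z :: int ^ 'd::finite. \<forall>i. \<bar>z $ i\<bar> \<le> n}"
proof -
  have bij: "bij_betw vec_nth {z :: int ^ 'd::finite. \<forall>i. \<bar>z $ i\<bar> \<le> n} (PiE UNIV (\<lambda>_. {-n..n}))"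
    apply (rule bij_betwI[where g = vec_lambda])
       apply (auto simp: PiE_def extensional_def abs_le_iff)
    apply (metis minus_le_iff)
    by (simp add: Pi_iff) (metis atLeastAtMost_iff minus_le_iff)
  have "card (PiE (UNIV::'d set) (\<lambda>_. {-n..n})) = nat (2*n+1) ^ CARD('d)"
    by (simp add: card_PiE)
  thus "card {z :: int ^ 'd::finite. \<forall>i. \<bar>z $ i\<bar> \<le> n} = nat (2*n+1) ^ CARD('d)"
    using bij_betw_same_card[OF bij] by simp
  show "finite {z :: int ^ 'd::finite. \<forall>i. \<bar>z $ i\<bar> \<le> n}"
    using bij_betw_finite[OF bij] by (simp add: finite_PiE)
qed

lemma ball_sub: "{z :: int ^ 'd::finite. lnorm z \<le> r} \<subseteq> {z. \<forall>i. \<bar>z $ i\<bar> \<le> \<lfloor>r\<rfloor>}"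
  using lnorm_comp by (auto simp: le_floor_iff intro: order_trans)

lemma ball_finite: "finite {z :: int ^ 'd::finite. lnorm z \<le> r}"
  using ball_sub box_finite finite_subset by blast

lemma ball_finite': "finite {z :: int ^ 'd::finite. lnorm z < r}"
  by (rule finite_subset[OF _ ball_finite[of r]]) auto

lemma ball_card: assumes "0 \<le> r"
  shows "real (card {z :: int ^ 'd::finite. lnorm z < r}) \<le> (2*r+1) ^ CARD('d)"
proof -
  have "card {z :: int ^ 'd::finite. lnorm z < r} \<le> card {z :: int ^ 'd::finite. \<forall>i. \<bar>z $ i\<bar> \<le> \<lfloor>r\<rfloor>}"
    by (rule card_mono[OF box_finite]) (use ball_sub[of r] in force)
  also have "\<dots> = nat (2*\<lfloor>r\<rfloor>+1) ^ CARD('d)" by (rule box_card)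
  finally have "real (card {z :: int ^ 'd::finite. lnorm z < r}) \<le> real (nat (2*\<lfloor>r\<rfloor>+1)) ^ CARD('d)"
    by (metis of_nat_le_iff of_nat_power)
  also have "\<dots> \<le> (2*r+1) ^ CARD('d)"
    apply (rule power_mono) using assms by (auto simp: of_nat_nat) 
  finally show ?thesis .
qed

definition wt :: "real \<Rightarrow> int ^ 'd::finite \<Rightarrow> real" where
  "wt \<alpha> z = max 1 (lnorm z) powr (-\<alpha>)"

lemma wt_pos: "0 < wt \<alpha> z" by (simp add: wt_def)

lemma count_step:
  fixes \<alpha> C r :: real
  defines "d \<equiv> real CARD('d::finite)"
  assumes a: "0 < \<alpha>" "\<alpha> < d" and C: "C = 5^CARD('d) * 2 powr \<alpha> / (1 - 2 powr (\<alpha> - d))"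
  assumes r: "1 \<le> r" "r \<le> 2 ^ n"
  shows "(\<Sum>z\<in>{z :: int ^ 'd. lnorm z < r}. wt \<alpha> z) \<le> C * r powr (d - \<alpha>)"
  using r
proof (induction n arbitrary: r)
  have q: "2 powr (\<alpha> - d) < 1" using a by (simp add: powr_less_one)
  have q0: "0 < 2 powr (\<alpha> - d)" by simp
  have c5: "5^CARD('d) \<le> C"
  proof -
    have "1 \<le> 2 powr \<alpha>" using a by (simp add: ge_one_powr_ge_zero)
    moreover have "1 - 2 powr (\<alpha> - d) \<le> 1" using q0 by linarith
    ultimately have "1 \<le> 2 powr \<alpha> / (1 - 2 powr (\<alpha> - d))" using q by (simp add: field_simps) (smt (verit) powr_gt_zero)
    hence "5^CARD('d) * 1 \<le> 5^CARD('d) * (2 powr \<alpha> / (1 - 2 powr (\<alpha> - d)))"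
      by (intro mult_left_mono) auto
    thus ?thesis using C by simp
  qed
  have c0: "0 \<le> C" by (rule order_trans[OF _ c5]) simp
  have base: "(\<Sum>z\<in>{z :: int ^ 'd. lnorm z < r}. wt \<alpha> z) \<le> C * r powr (d - \<alpha>)"
    if "1 \<le> r" "r \<le> 2" for r
  proof -
    have "(\<Sum>z\<in>{z :: int ^ 'd. lnorm z < r}. wt \<alpha> z) \<le> (\<Sum>z\<in>{z :: int ^ 'd. lnorm z < r}. 1)"
      by (rule sum_mono) (use a in \<open>auto simp: wt_def powr_minus divide_simps intro!: ge_one_powr_ge_zero\<close>)
    also have "\<dots> \<le> (2*r+1)^CARD('d)" using ball_card[of r, where 'd='d] that by simp
    also have "\<dots> \<le> 5^CARD('d)" by (rule power_mono) (use that in auto)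
    also have "\<dots> \<le> C * 1" using c5 by simp
    also have "\<dots> \<le> C * r powr (d - \<alpha>)"
      by (rule mult_left_mono) (use that a c0 in \<open>auto intro: ge_one_powr_ge_zero\<close>)
    finally show ?thesis .
  qed
  {
    case 0 thus ?case using base[of r] by simp
  next
    case (Suc n)
    show ?case
    proof (cases "r \<le> 2")
      case True thus ?thesis using base Suc.prems by simp
    next
      case False
      hence r2: "2 < r" by simp
      have IH: "(\<Sum>z\<in>{z :: int ^ 'd. lnorm z < r/2}. wt \<alpha> z) \<le> C * (r/2) powr (d - \<alpha>)"
        using Suc.IH[of "r/2"] Suc.prems r2 by simp
      let ?A = "{z :: int ^ 'd. lnorm z < r/2}" and ?B = "{z :: int ^ 'd. r/2 \<le> lnorm z \<and> lnorm z < r}"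
      have split: "{z :: int ^ 'd. lnorm z < r} = ?A \<union> ?B" using r2 by auto
      have fB: "finite ?B" by (rule finite_subset[OF _ ball_finite'[of r]]) auto
      have sum_split: "(\<Sum>z\<in>{z :: int ^ 'd. lnorm z < r}. wt \<alpha> z) = (\<Sum>z\<in>?A. wt \<alpha> z) + (\<Sum>z\<in>?B. wt \<alpha> z)"
        unfolding split by (rule sum.union_disjoint) (use ball_finite'[of "r/2"] fB in auto)
      have "(\<Sum>z\<in>?B. wt \<alpha> z) \<le> (\<Sum>z\<in>?B. (r/2) powr (-\<alpha>))"
      proof (rule sum_mono)
        fix z assume z: "z \<in> ?B"
        have "max 1 (lnorm z) powr (-\<alpha>) \<le> (r/2) powr (-\<alpha>)"
          by (rule powr_mono2') (use z a r2 in auto)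
        thus "wt \<alpha> z \<le> (r/2) powr (-\<alpha>)" by (simp add: wt_def)
      qed
      also have "\<dots> = real (card ?B) * (r/2) powr (-\<alpha>)" by simp
      also have "\<dots> \<le> (2*r+1)^CARD('d) * (r/2) powr (-\<alpha>)"
      proof (rule mult_right_mono)
        have "card ?B \<le> card {z :: int ^ 'd. lnorm z < r}" by (rule card_mono[OF ball_finite']) auto
        thus "real (card ?B) \<le> (2*r+1)^CARD('d)" using ball_card[of r, where 'd='d] r2 by (smt (verit) of_nat_le_iff)
      qed simp
      also have "\<dots> \<le> (3*r)^CARD('d) * (r/2) powr (-\<alpha>)"
        by (intro mult_right_mono power_mono) (use r2 in auto)
      also have "\<dots> = 3^CARD('d) * 2 powr \<alpha> * r powr (d - \<alpha>)"
      proof -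
        have "(3*r)^CARD('d) = 3^CARD('d) * r powr d"
          using r2 by (simp add: power_mult_distrib d_def powr_realpow)
        moreover have "(r/2) powr (-\<alpha>) = r powr (-\<alpha>) * 2 powr \<alpha>"
          using r2 by (simp add: powr_divide powr_minus divide_simps)
        moreover have "r powr (d - \<alpha>) = r powr d * r powr (-\<alpha>)"
          using r2 by (simp add: powr_add[symmetric])
        ultimately show ?thesis by simp
      qed
      finally have hB: "(\<Sum>z\<in>?B. wt \<alpha> z) \<le> 3^CARD('d) * 2 powr \<alpha> * r powr (d - \<alpha>)" .
      have hA: "C * (r/2) powr (d - \<alpha>) = C * 2 powr (\<alpha> - d) * r powr (d - \<alpha>)"
        using r2 by (simp add: powr_divide powr_minus divide_simps powr_diff)
      have key: "C * 2 powr (\<alpha> - d) + 3^CARD('d) * 2 powr \<alpha> \<le> C"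
      proof -
        have e: "C * (1 - 2 powr (\<alpha> - d)) = 5^CARD('d) * 2 powr \<alpha>" using C q a by simp
        have i: "3^CARD('d) * 2 powr \<alpha> \<le> 5^CARD('d) * 2 powr \<alpha>"
          by (intro mult_right_mono power_mono) auto
        have e2: "C - C * 2 powr (\<alpha> - d) = 5^CARD('d) * 2 powr \<alpha>" using e by (simp add: right_diff_distrib)
        show ?thesis using e2 i by linarith
      qed
      have "(\<Sum>z\<in>{z :: int ^ 'd. lnorm z < r}. wt \<alpha> z)
          \<le> (C * 2 powr (\<alpha> - d) + 3^CARD('d) * 2 powr \<alpha>) * r powr (d - \<alpha>)"
        using sum_split IH hA hB by (simp add: algebra_simps)
      also have "\<dots> \<le> C * r powr (d - \<alpha>)" by (rule mult_right_mono[OF key]) simp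
      finally show ?thesis .
    qed
  }
qed

lemma ev_lat: "eventually P at_infty_lat \<longleftrightarrow> (\<exists>R. \<forall>x. R \<le> lnorm x \<longrightarrow> P x)"
  unfolding at_infty_lat_def eventually_filtercomap eventually_at_top_linorder
  by auto
lemma count_bound:
  fixes \<alpha> r :: real
  assumes a: "0 < \<alpha>" "\<alpha> < real CARD('d::finite)" and r: "1 \<le> r"
  shows "(\<Sum>z\<in>{z :: int ^ 'd. lnorm z < r}. wt \<alpha> z)
     \<le> (5^CARD('d) * 2 powr \<alpha> / (1 - 2 powr (\<alpha> - real CARD('d)))) * r powr (real CARD('d) - \<alpha>)"
proof -
  obtain n where "r < 2 ^ n" using real_arch_pow[of 2 r] by auto
  thus ?thesis using count_step[OF a refl r, of n] by simp
qed

lemma tail_lemma: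
  fixes g :: "int ^ 'd::finite \<Rightarrow> real"
  assumes hs: "((\<lambda>x. \<bar>g x\<bar>) has_sum K) UNIV" and e: "0 < e"
  shows "\<exists>T. \<forall>t\<ge>T. infsum (\<lambda>y. \<bar>g y\<bar>) {y. t < lnorm y} \<le> e"
proof -
  have "((\<lambda>F. sum (\<lambda>x. \<bar>g x\<bar>) F) \<longlongrightarrow> K) (finite_subsets_at_top UNIV)"
    using hs by (simp add: has_sum_def)
  hence "eventually (\<lambda>F. dist (sum (\<lambda>x. \<bar>g x\<bar>) F) K < e) (finite_subsets_at_top UNIV)"
    by (rule tendstoD[OF _ e])
  then obtain X where X0: "finite X" "X \<subseteq> UNIV" "\<forall>Y. finite Y \<and> X \<subseteq> Y \<and> Y \<subseteq> UNIV \<longrightarrow> dist (sum (\<lambda>x. \<bar>g x\<bar>) Y) K < e"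
    unfolding eventually_finite_subsets_at_top by (elim exE conjE) (rule that)
  have X: "finite X" "\<And>Y. finite Y \<Longrightarrow> X \<subseteq> Y \<Longrightarrow> dist (sum (\<lambda>x. \<bar>g x\<bar>) Y) K < e"
    using X0 by auto
  define T where "T = (\<Sum>x\<in>X. lnorm x)"
  have sm: "(\<lambda>y. \<bar>g y\<bar>) summable_on UNIV" using hs by (auto simp: summable_on_def)
  have "infsum (\<lambda>y. \<bar>g y\<bar>) {y. t < lnorm y} \<le> e" if t: "T \<le> t" for t
  proof -
    let ?Y = "{y :: int ^ 'd. lnorm y \<le> t}"
    have XY: "X \<subseteq> ?Y"
    proof
      fix x assume "x \<in> X"
      hence "lnorm x \<le> T" unfolding T_def
        using member_le_sum[of x X lnorm] X(1) lnorm_nonneg by blast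
      thus "x \<in> ?Y" using t by simp
    qed
    have U: "UNIV = ?Y \<union> {y. t < lnorm y}" by auto
    have "K = infsum (\<lambda>y. \<bar>g y\<bar>) UNIV" using infsumI[OF hs] by simp
    also have "\<dots> = infsum (\<lambda>y. \<bar>g y\<bar>) ?Y + infsum (\<lambda>y. \<bar>g y\<bar>) {y. t < lnorm y}"
    proof -
      have "infsum (\<lambda>y. \<bar>g y\<bar>) (?Y \<union> {y. t < lnorm y}) = infsum (\<lambda>y. \<bar>g y\<bar>) ?Y + infsum (\<lambda>y. \<bar>g y\<bar>) {y. t < lnorm y}"
        by (rule infsum_Un_disjoint[OF summable_on_subset_banach[OF sm] summable_on_subset_banach[OF sm]]) auto
      thus ?thesis by (simp only: U[symmetric])
    qed
    also have "infsum (\<lambda>y. \<bar>g y\<bar>) ?Y = sum (\<lambda>y. \<bar>g y\<bar>) ?Y" by (rule infsum_finite[OF ball_finite])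
    finally show ?thesis using X(2)[OF ball_finite XY] by (simp add: dist_real_def)
  qed
  thus ?thesis by blast
qed

lemma ratio_helper: fixes a p :: real assumes "0 < p" shows "\<bar>a / p - 1\<bar> * p = \<bar>a - p\<bar>"
proof -
  have "\<bar>a / p - 1\<bar> * p = \<bar>(a / p - 1) * p\<bar>" using assms by (simp add: abs_mult)
  also have "(a / p - 1) * p = a - p" using assms by (simp add: field_simps)
  finally show ?thesis .
qed

lemma f_asym:
  fixes f :: "int ^ 'd::finite \<Rightarrow> real"
  assumes A: "A > 0" and fa: "f \<sim>[at_infty_lat] (\<lambda>x. A * lnorm x powr (-\<alpha>))" and e: "0 < e"
  shows "\<exists>R1\<ge>1. \<forall>z. R1 \<le> lnorm z \<longrightarrow> \<bar>f z - A * lnorm z powr (-\<alpha>)\<bar> \<le> e * (A * lnorm z powr (-\<alpha>))"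
proof -
  have "((\<lambda>x. if f x = 0 \<and> A * lnorm x powr (-\<alpha>) = 0 then 1 else f x / (A * lnorm x powr (-\<alpha>))) \<longlongrightarrow> 1) at_infty_lat"
    by (rule asymp_equivD[OF fa])
  hence "eventually (\<lambda>x. dist (if f x = 0 \<and> A * lnorm x powr (-\<alpha>) = 0 then 1 else f x / (A * lnorm x powr (-\<alpha>))) 1 < e) at_infty_lat"
    by (rule tendstoD[OF _ e])
  then obtain R where R: "\<And>x. R \<le> lnorm x \<Longrightarrow> dist (if f x = 0 \<and> A * lnorm x powr (-\<alpha>) = 0 then 1 else f x / (A * lnorm x powr (-\<alpha>))) 1 < e"
    unfolding ev_lat by (elim exE) (rule that, blast)
  have "\<bar>f z - A * lnorm z powr (-\<alpha>)\<bar> \<le> e * (A * lnorm z powr (-\<alpha>))" if z: "max 1 R \<le> lnorm z" for z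
  proof -
    have p: "0 < A * lnorm z powr (-\<alpha>)" using A z by auto
    have "\<bar>f z / (A * lnorm z powr (-\<alpha>)) - 1\<bar> < e" using R[of z] z p A by (simp add: dist_real_def)
    hence "\<bar>f z / (A * lnorm z powr (-\<alpha>)) - 1\<bar> * (A * lnorm z powr (-\<alpha>)) \<le> e * (A * lnorm z powr (-\<alpha>))"
      using p by (intro mult_right_mono) auto
    also have "\<bar>f z / (A * lnorm z powr (-\<alpha>)) - 1\<bar> * (A * lnorm z powr (-\<alpha>)) = \<bar>f z - A * lnorm z powr (-\<alpha>)\<bar>"
      using p by (rule ratio_helper)
    finally show ?thesis .
  qed
  thus ?thesis by (intro exI[of _ "max 1 R"]) auto
qed

lemma f_bound:
  fixes f :: "int ^ 'd::finite \<Rightarrow> real"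
  assumes A: "A > 0" and a: "0 < \<alpha>" and fa: "f \<sim>[at_infty_lat] (\<lambda>x. A * lnorm x powr (-\<alpha>))"
  shows "\<exists>B>0. \<forall>z. \<bar>f z\<bar> \<le> B * wt \<alpha> z"
proof -
  obtain R1 where R1: "R1 \<ge> 1" "\<And>z. R1 \<le> lnorm z \<Longrightarrow> \<bar>f z - A * lnorm z powr (-\<alpha>)\<bar> \<le> 1 * (A * lnorm z powr (-\<alpha>))"
    using f_asym[OF A fa, of 1] by auto
  define M where "M = (\<Sum>z\<in>{z. lnorm z \<le> R1}. \<bar>f z\<bar>)"
  define B where "B = 2 * A + M * R1 powr \<alpha>"
  have M0: "0 \<le> M" unfolding M_def by (rule sum_nonneg) auto
  have B0: "0 < B" unfolding B_def using A M0 R1 by (auto intro!: add_pos_nonneg)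
  have "\<bar>f z\<bar> \<le> B * wt \<alpha> z" for z
  proof (cases "R1 \<le> lnorm z")
    case True
    hence w: "wt \<alpha> z = lnorm z powr (-\<alpha>)" using R1 by (simp add: wt_def max_def)
    have "\<bar>f z\<bar> \<le> 2 * A * wt \<alpha> z" using R1(2)[OF True] w by (simp add: abs_le_iff)
    also have "\<dots> \<le> B * wt \<alpha> z"
      by (rule mult_right_mono) (use M0 R1 wt_pos[of \<alpha> z] in \<open>auto simp: B_def\<close>)
    finally show ?thesis .
  next
    case False
    have "\<bar>f z\<bar> \<le> M" unfolding M_def
      by (rule member_le_sum) (use False ball_finite in auto)
    also have "M = M * R1 powr \<alpha> * R1 powr (-\<alpha>)" using R1 by (simp add: powr_minus)
    also have "\<dots> \<le> M * R1 powr \<alpha> * wt \<alpha> z"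
    proof (rule mult_left_mono)
      show "R1 powr (-\<alpha>) \<le> wt \<alpha> z" unfolding wt_def
        by (rule powr_mono2') (use a False R1 in auto)
    qed (use M0 in auto)
    also have "\<dots> \<le> B * wt \<alpha> z"
      by (rule mult_right_mono) (use A wt_pos[of \<alpha> z] in \<open>auto simp: B_def\<close>)
    finally show ?thesis .
  qed
  thus ?thesis using B0 by blast
qed

lemma delta_choice:
  fixes \<alpha> e c0 p :: real
  assumes a: "0 < \<alpha>" and e: "0 < e" and p: "0 < p"
  shows "\<exists>\<delta>. 0 < \<delta> \<and> \<delta> \<le> 1/2 \<and> (1-\<delta>) powr (-\<alpha>) \<le> 1+e \<and> 1-e \<le> (1+\<delta>) powr (-\<alpha>) \<and> c0 * \<delta> powr p \<le> e"
proof -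
  have t1: "((\<lambda>\<delta>. (1-\<delta>) powr (-\<alpha>)) \<longlongrightarrow> (1-0) powr (-\<alpha>)) (at_right (0::real))"
    by (intro tendsto_intros) auto
  have t2: "((\<lambda>\<delta>. (1+\<delta>) powr (-\<alpha>)) \<longlongrightarrow> (1+0) powr (-\<alpha>)) (at_right (0::real))"
    by (intro tendsto_intros) auto
  have t3: "((\<lambda>\<delta>. c0 * \<delta> powr p) \<longlongrightarrow> c0 * 0) (at_right (0::real))"
    by (intro tendsto_intros tendsto_zero_powrI[OF _ tendsto_const _ p])
       (auto intro: tendsto_ident_at eventually_at_right_less[THEN eventually_mono])
  have t4: "((\<lambda>\<delta>. \<delta>) \<longlongrightarrow> 0) (at_right (0::real))" by (rule tendsto_ident_at)
  have "eventually (\<lambda>\<delta>. (1-\<delta>) powr (-\<alpha>) < 1+e) (at_right (0::real))"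
    using order_tendstoD(2)[OF t1] e by simp
  moreover have "eventually (\<lambda>\<delta>. 1-e < (1+\<delta>) powr (-\<alpha>)) (at_right (0::real))"
    using order_tendstoD(1)[OF t2] e by simp
  moreover have "eventually (\<lambda>\<delta>. c0 * \<delta> powr p < e) (at_right (0::real))"
    using order_tendstoD(2)[OF t3] e by simp
  moreover have "eventually (\<lambda>\<delta>. \<delta> < 1/2) (at_right (0::real))"
    using order_tendstoD(2)[OF t4, of "1/2"] by simp
  moreover have "eventually (\<lambda>\<delta>. 0 < \<delta>) (at_right (0::real))"
    by (rule eventually_at_right_less)
  ultimately have "eventually (\<lambda>\<delta>. 0 < \<delta> \<and> \<delta> \<le> 1/2 \<and> (1-\<delta>) powr (-\<alpha>) \<le> 1+e \<and> 1-e \<le> (1+\<delta>) powr (-\<alpha>) \<and> c0 * \<delta> powr p \<le> e) (at_right (0::real))"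
    by eventually_elim auto
  from eventually_happens[OF this] show ?thesis by auto
qed

lemma pointwise:
  fixes f g :: "int ^ 'd::finite \<Rightarrow> real" and x y :: "int ^ 'd"
  defines "d \<equiv> real CARD('d)"
  assumes a: "0 < \<alpha>" and A: "A > 0" and K: "K > 0" and B: "B > 0"
    and e: "0 < e" "e \<le> 1" and dl: "0 < \<delta>" "\<delta> \<le> 1/2"
    and pw1: "(1-\<delta>) powr (-\<alpha>) \<le> 1+e" and pw2: "1-e \<le> (1+\<delta>) powr (-\<alpha>)"
    and fb: "\<And>z. \<bar>f z\<bar> \<le> B * wt \<alpha> z"
    and fa: "\<And>z. R1 \<le> lnorm z \<Longrightarrow> \<bar>f z - A * lnorm z powr (-\<alpha>)\<bar> \<le> e * (A * lnorm z powr (-\<alpha>))"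
    and gb: "\<And>y. y \<noteq> 0 \<Longrightarrow> \<bar>g y\<bar> \<le> K * lnorm y powr (- d)"
    and R: "lnorm x = R" "2 * R1 \<le> R" "1 \<le> \<delta> * R" "1 \<le> R1"
  shows "\<bar>R powr \<alpha> * f (x - y) - A\<bar> * \<bar>g y\<bar> \<le> 3 * A * e * \<bar>g y\<bar>
     + (if \<delta> * R < lnorm y then (B * \<delta> powr (-\<alpha>) + A) * \<bar>g y\<bar> else 0)
     + (if lnorm (x - y) < \<delta> * R then (R powr (\<alpha> - d) * K * 2 powr d * B) * wt \<alpha> (x - y) else 0)"
proof -
  define z where "z = x - y"
  have R0: "0 < R" using R by linarith
  have hd: "\<delta> * R \<le> R / 2" using mult_right_mono[OF dl(2), of R] R0 by simp
  have hd2: "(1-\<delta>)*R = R - \<delta>*R" by (simp add: algebra_simps)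
  have nz1: "R - lnorm y \<le> lnorm z" using lnorm_diff_ge[of x y] R unfolding z_def by simp
  have nz2: "lnorm z \<le> R + lnorm y" using lnorm_diff_le[of x y] R unfolding z_def by simp
  have ny1: "R - lnorm z \<le> lnorm y"
    using lnorm_diff_ge[of x z] R unfolding z_def by simp
  have T3: "0 \<le> (if lnorm (x - y) < \<delta> * R then (R powr (\<alpha> - d) * K * 2 powr d * B) * wt \<alpha> (x - y) else 0)"
    using K B wt_pos[of \<alpha> "x-y"] by auto
  have T2: "0 \<le> (if \<delta> * R < lnorm y then (B * \<delta> powr (-\<alpha>) + A) * \<bar>g y\<bar> else 0)"
    using A B by auto
  show ?thesis
  proof (cases "lnorm y \<le> \<delta> * R")
    case True
    have z1: "(1-\<delta>) * R \<le> lnorm z" using nz1 True by (simp add: algebra_simps)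
    have z2: "lnorm z \<le> (1+\<delta>) * R" using nz2 True by (simp add: algebra_simps)
    have zR1: "R1 \<le> lnorm z" using z1 R hd hd2 by linarith
    have zpos: "0 < lnorm z" using zR1 R by linarith
    define \<rho> where "\<rho> = R powr \<alpha> * lnorm z powr (-\<alpha>)"
    have \<rho>eq: "\<rho> = (lnorm z / R) powr (-\<alpha>)"
      unfolding \<rho>_def using R0 zpos by (simp add: powr_divide powr_minus divide_simps)
    have "\<rho> \<le> (1-\<delta>) powr (-\<alpha>)" unfolding \<rho>eq
    proof (rule powr_mono2')
      show "1 - \<delta> \<le> lnorm z / R" using z1 R0 by (simp add: le_divide_eq)
    qed (use a dl in auto)
    hence \<rho>1: "\<rho> \<le> 1 + e" using pw1 by linarith
    have "(1+\<delta>) powr (-\<alpha>) \<le> \<rho>" unfolding \<rho>eq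
    proof (rule powr_mono2')
      show "lnorm z / R \<le> 1 + \<delta>" using z2 R0 by (simp add: divide_le_eq)
    qed (use a dl R0 zpos in auto)
    hence \<rho>2: "1 - e \<le> \<rho>" using pw2 by linarith
    have \<rho>0: "0 \<le> \<rho>" unfolding \<rho>_def by simp
    have fz: "\<bar>f z - A * lnorm z powr (-\<alpha>)\<bar> \<le> e * (A * lnorm z powr (-\<alpha>))" by (rule fa[OF zR1])
    have "R powr \<alpha> * f z - A = A * (\<rho> - 1) + R powr \<alpha> * (f z - A * lnorm z powr (-\<alpha>))"
      unfolding \<rho>_def by (simp add: algebra_simps)
    hence "\<bar>R powr \<alpha> * f z - A\<bar> = \<bar>A * (\<rho> - 1) + R powr \<alpha> * (f z - A * lnorm z powr (-\<alpha>))\<bar>" by simp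
    also have "\<dots> \<le> \<bar>A * (\<rho> - 1)\<bar> + \<bar>R powr \<alpha> * (f z - A * lnorm z powr (-\<alpha>))\<bar>" by (rule abs_triangle_ineq)
    also have "\<dots> = A * \<bar>\<rho> - 1\<bar> + R powr \<alpha> * \<bar>f z - A * lnorm z powr (-\<alpha>)\<bar>"
      using A by (simp add: abs_mult)
    also have "\<dots> \<le> A * e + R powr \<alpha> * (e * (A * lnorm z powr (-\<alpha>)))"
      using \<rho>1 \<rho>2 A fz by (intro add_mono mult_left_mono) auto
    also have "R powr \<alpha> * (e * (A * lnorm z powr (-\<alpha>))) = A * e * \<rho>" unfolding \<rho>_def by simp
    also have "A * e + A * e * \<rho> \<le> 3 * A * e"
    proof -
      have "A * e * \<rho> \<le> A * e * 2" using \<rho>1 e A by (intro mult_left_mono) auto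
      thus ?thesis by linarith
    qed
    finally have "\<bar>R powr \<alpha> * f z - A\<bar> * \<bar>g y\<bar> \<le> 3 * A * e * \<bar>g y\<bar>"
      by (intro mult_right_mono) auto
    thus ?thesis using T2 T3 unfolding z_def by linarith
  next
    case False
    hence y1: "\<delta> * R < lnorm y" by simp
    have base: "\<bar>R powr \<alpha> * f z - A\<bar> * \<bar>g y\<bar> \<le> R powr \<alpha> * \<bar>f z\<bar> * \<bar>g y\<bar> + A * \<bar>g y\<bar>"
    proof -
      have "\<bar>R powr \<alpha> * f z - A\<bar> \<le> R powr \<alpha> * \<bar>f z\<bar> + A" 
      proof -
        have "\<bar>R powr \<alpha> * f z - A\<bar> \<le> \<bar>R powr \<alpha> * f z\<bar> + \<bar>A\<bar>" by (rule abs_triangle_ineq4)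
        thus ?thesis using A by (simp add: abs_mult)
      qed
      thus ?thesis by (metis abs_ge_zero distrib_right mult_right_mono)
    qed
    show ?thesis
    proof (cases "\<delta> * R \<le> lnorm z")
      case True
      have zpos: "1 \<le> lnorm z" using True R by linarith
      have "\<bar>f z\<bar> \<le> B * lnorm z powr (-\<alpha>)" using fb[of z] zpos by (simp add: wt_def max_def)
      also have "\<dots> \<le> B * (\<delta> * R) powr (-\<alpha>)"
        by (intro mult_left_mono powr_mono2') (use a True R B in auto)
      finally have "R powr \<alpha> * \<bar>f z\<bar> \<le> R powr \<alpha> * (B * (\<delta> * R) powr (-\<alpha>))"
        by (intro mult_left_mono) auto
      also have "\<dots> = B * \<delta> powr (-\<alpha>)"
        using R0 dl by (simp add: powr_mult powr_minus field_simps)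
      finally have "R powr \<alpha> * \<bar>f z\<bar> * \<bar>g y\<bar> \<le> B * \<delta> powr (-\<alpha>) * \<bar>g y\<bar>"
        by (intro mult_right_mono) auto
      hence "\<bar>R powr \<alpha> * f z - A\<bar> * \<bar>g y\<bar> \<le> (B * \<delta> powr (-\<alpha>) + A) * \<bar>g y\<bar>"
        using base by (simp add: distrib_right)
      moreover have "0 \<le> 3 * A * e * \<bar>g y\<bar>" using A e by simp
      ultimately show ?thesis using y1 T3 unfolding z_def by auto
    next
      case False
      hence z1: "lnorm z < \<delta> * R" by simp
      have yR: "R / 2 \<le> lnorm y" using ny1 z1 hd by linarith
      hence y0: "y \<noteq> 0" using R0 by auto
      have "\<bar>g y\<bar> \<le> K * lnorm y powr (- d)" by (rule gb[OF y0])
      also have "\<dots> \<le> K * (R / 2) powr (- d)"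
        by (intro mult_left_mono powr_mono2') (use yR R0 K in \<open>auto simp: d_def\<close>)
      also have "\<dots> = K * 2 powr d * R powr (- d)"
        using R0 by (simp add: powr_divide powr_minus divide_simps)
      finally have gy: "\<bar>g y\<bar> \<le> K * 2 powr d * R powr (- d)" .
      have "R powr \<alpha> * \<bar>f z\<bar> * \<bar>g y\<bar> \<le> R powr \<alpha> * (B * wt \<alpha> z) * (K * 2 powr d * R powr (- d))"
        by (intro mult_mono mult_left_mono fb) (use gy B wt_pos[of \<alpha> z] in auto)
      also have "\<dots> = (R powr (\<alpha> - d) * K * 2 powr d * B) * wt \<alpha> z"
        using R0 by (simp add: powr_diff powr_minus field_simps)
      finally have "\<bar>R powr \<alpha> * f z - A\<bar> * \<bar>g y\<bar> \<le> (R powr (\<alpha> - d) * K * 2 powr d * B) * wt \<alpha> z + A * \<bar>g y\<bar>"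
        using base by linarith
      moreover have "A * \<bar>g y\<bar> \<le> (B * \<delta> powr (-\<alpha>) + A) * \<bar>g y\<bar>"
        using B by (intro mult_right_mono) auto
      moreover have "0 \<le> 3 * A * e * \<bar>g y\<bar>" using A e by simp
      ultimately show ?thesis using y1 z1 unfolding z_def by auto
    qed
  qed
qed

lemma u3_sum:
  fixes x :: "int ^ 'd::finite"
  shows "(\<lambda>y. if lnorm (x - y) < r then c * wt \<alpha> (x - y) else 0) summable_on UNIV"
    and "infsum (\<lambda>y. if lnorm (x - y) < r then c * wt \<alpha> (x - y) else 0) UNIV
         = c * (\<Sum>z\<in>{z :: int ^ 'd. lnorm z < r}. wt \<alpha> z)"
proof -
  let ?u = "\<lambda>y. if lnorm (x - y) < r then c * wt \<alpha> (x - y) else 0"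
  let ?Z = "{z :: int ^ 'd. lnorm z < r}"
  have Yeq: "{y. lnorm (x - y) < r} = (\<lambda>z. x - z) ` ?Z"
  proof (rule set_eqI, rule iffI)
    fix y assume "y \<in> {y. lnorm (x - y) < r}"
    thus "y \<in> (\<lambda>z. x - z) ` ?Z" by (intro image_eqI[of _ _ "x - y"]) auto
  qed auto
  have inj: "inj_on (\<lambda>z. x - z) ?Z" by (rule inj_onI) simp
  have fin: "finite {y. lnorm (x - y) < r}" unfolding Yeq using ball_finite' by blast
  have sm: "?u summable_on UNIV \<longleftrightarrow> ?u summable_on {y. lnorm (x - y) < r}"
    by (rule summable_on_cong_neutral) auto
  thus "?u summable_on UNIV" using fin by simp
  have "infsum ?u UNIV = infsum ?u {y. lnorm (x - y) < r}"
    by (rule infsum_cong_neutral) auto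
  also have "\<dots> = sum ?u {y. lnorm (x - y) < r}" by (rule infsum_finite[OF fin])
  also have "\<dots> = sum ?u ((\<lambda>z. x - z) ` ?Z)" unfolding Yeq ..
  also have "\<dots> = sum (?u \<circ> (\<lambda>z. x - z)) ?Z" by (rule sum.reindex[OF inj])
  also have "\<dots> = sum (\<lambda>z. c * wt \<alpha> z) ?Z" by (rule sum.cong) auto
  also have "\<dots> = c * sum (wt \<alpha>) ?Z" by (simp add: sum_distrib_left)
  finally show "infsum ?u UNIV = c * (\<Sum>z\<in>?Z. wt \<alpha> z)" .
qed

lemma u2_sum:
  fixes g :: "int ^ 'd::finite \<Rightarrow> real"
  assumes sm: "(\<lambda>y. \<bar>g y\<bar>) summable_on UNIV"
  shows "(\<lambda>y. if t < lnorm y then c * \<bar>g y\<bar> else 0) summable_on UNIV"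
    and "infsum (\<lambda>y. if t < lnorm y then c * \<bar>g y\<bar> else 0) UNIV
         = c * infsum (\<lambda>y. \<bar>g y\<bar>) {y. t < lnorm y}"
proof -
  let ?u = "\<lambda>y. if t < lnorm y then c * \<bar>g y\<bar> else 0"
  have s1: "(\<lambda>y. \<bar>g y\<bar>) summable_on {y. t < lnorm y}"
    by (rule summable_on_subset_banach[OF sm]) auto
  have "?u summable_on UNIV \<longleftrightarrow> (\<lambda>y. c * \<bar>g y\<bar>) summable_on {y. t < lnorm y}"
    by (rule summable_on_cong_neutral) auto
  thus "?u summable_on UNIV" using summable_on_cmult_right[OF s1, of c] by simp
  have "infsum ?u UNIV = infsum (\<lambda>y. c * \<bar>g y\<bar>) {y. t < lnorm y}"
    by (rule infsum_cong_neutral) auto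
  also have "\<dots> = c * infsum (\<lambda>y. \<bar>g y\<bar>) {y. t < lnorm y}"
    by (rule infsum_cmult_right) (use s1 in auto)
  finally show "infsum ?u UNIV = c * infsum (\<lambda>y. \<bar>g y\<bar>) {y. t < lnorm y}" .
qed

theorem lemmaB1:
  fixes f g :: "int ^ 'd::finite \<Rightarrow> real" and \<alpha> A K :: real
  assumes "0 < \<alpha>" and "\<alpha> < real CARD('d)"
    and "A > 0" and "K > 0"
    and "f \<sim>[at_infty_lat] (\<lambda>x. A * lnorm x powr (-\<alpha>))"
    and "((\<lambda>x. \<bar>g x\<bar>) has_sum K) UNIV"
    and "\<And>x. x \<noteq> 0 \<Longrightarrow> \<bar>g x\<bar> \<le> K * lnorm x powr (- real CARD('d))"
  shows "((\<lambda>x. lnorm x powr \<alpha> * lconv f g x) \<longlongrightarrow> A * (\<Sum>\<^sub>\<infinity>y. g y)) at_infty_lat"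
proof -
  note a = assms(1) and ad = assms(2) and A = assms(3) and K = assms(4) and fa = assms(5)
    and hs = assms(6) and gb = assms(7)
  define d where "d = real CARD('d)"
  define S where "S = (\<Sum>\<^sub>\<infinity>y. g y)"
  have gabs: "(\<lambda>y. \<bar>g y\<bar>) summable_on UNIV" using hs by (auto simp: summable_on_def)
  have gK: "infsum (\<lambda>y. \<bar>g y\<bar>) UNIV = K" using infsumI[OF hs] by simp
  have gsum: "g summable_on UNIV"
    using gabs summable_on_iff_abs_summable_on_real[of g UNIV] by simp
  obtain B where B: "B > 0" "\<And>z. \<bar>f z\<bar> \<le> B * wt \<alpha> z" using f_bound[OF A a fa] by blast
  define C where "C = 5^CARD('d) * 2 powr \<alpha> / (1 - 2 powr (\<alpha> - d))"
  have C0: "0 < C"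
  proof -
    have "2 powr (\<alpha> - d) < 1" using ad by (simp add: d_def powr_less_one)
    thus ?thesis by (simp add: C_def)
  qed
  have wt1: "wt \<alpha> z \<le> 1" for z :: "int ^ 'd"
    unfolding wt_def using a by (simp add: powr_minus divide_simps ge_one_powr_ge_zero)
  show ?thesis unfolding S_def[symmetric]
  proof (rule tendstoI)
    fix \<epsilon> :: real assume \<epsilon>: "0 < \<epsilon>"
    define e where "e = min 1 (\<epsilon> / (2 * (3 * A * K + 2)))"
    have AK: "0 < 3 * A * K + 2" using A K by (simp add: add_pos_pos)
    have e0: "0 < e" "e \<le> 1" using \<epsilon> AK by (auto simp: e_def)
    have eps: "(3 * A * K + 2) * e < \<epsilon>"
    proof -
      have "(3 * A * K + 2) * e \<le> (3 * A * K + 2) * (\<epsilon> / (2 * (3 * A * K + 2)))"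
        using AK by (intro mult_left_mono) (auto simp: e_def)
      also have "\<dots> = \<epsilon> / 2" using AK by (simp add: field_simps)
      finally show ?thesis using \<epsilon> by linarith
    qed
    obtain \<delta> where dl: "0 < \<delta>" "\<delta> \<le> 1/2" and pw1: "(1-\<delta>) powr (-\<alpha>) \<le> 1+e"
      and pw2: "1-e \<le> (1+\<delta>) powr (-\<alpha>)" and dC: "(K * 2 powr d * B * C) * \<delta> powr (d - \<alpha>) \<le> e"
      using delta_choice[OF a e0(1), of "d - \<alpha>" "K * 2 powr d * B * C"] ad by (auto simp: d_def)
    obtain R1 where R1: "R1 \<ge> 1" "\<And>z. R1 \<le> lnorm z \<Longrightarrow> \<bar>f z - A * lnorm z powr (-\<alpha>)\<bar> \<le> e * (A * lnorm z powr (-\<alpha>))"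
      using f_asym[OF A fa e0(1)] by blast
    define c2 where "c2 = B * \<delta> powr (-\<alpha>) + A"
    have c2: "0 < c2" unfolding c2_def by (rule add_nonneg_pos) (use B(1) A in auto)
    obtain T where T: "\<And>t. T \<le> t \<Longrightarrow> infsum (\<lambda>y. \<bar>g y\<bar>) {y. t < lnorm y} \<le> e / c2"
      using tail_lemma[OF hs, of "e / c2"] e0 c2 by auto
    define R0 where "R0 = max (2 * R1) (max (T / \<delta>) (1 / \<delta>))"
    have "\<forall>x. R0 \<le> lnorm x \<longrightarrow> dist (lnorm x powr \<alpha> * lconv f g x) (A * S) < \<epsilon>"
    proof (intro allI impI)
      fix x :: "int ^ 'd" assume xR: "R0 \<le> lnorm x"
      define R where "R = lnorm x"
      have R2: "2 * R1 \<le> R" using xR by (simp add: R_def R0_def)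
      have R3: "1 \<le> \<delta> * R" "T \<le> \<delta> * R"
        using xR dl by (auto simp: R_def R0_def field_simps)
      have Rx: "lnorm x = R" by (simp add: R_def)
      have R0': "0 < R" using R2 R1 by linarith
      define h where "h = (\<lambda>y. (R powr \<alpha> * f (x - y) - A) * g y)"
      have fxg: "(\<lambda>y. f (x - y) * g y) summable_on UNIV"
      proof -
        have "(\<lambda>y. norm (f (x - y) * g y)) summable_on UNIV"
        proof (rule Infinite_Sum.abs_summable_on_comparison_test)
          show "(\<lambda>y. norm (B * \<bar>g y\<bar>)) summable_on UNIV"
            using summable_on_cmult_right[OF gabs, of B] B by simp
          fix y :: "int ^ 'd"
          have "\<bar>f (x - y)\<bar> \<le> B" using B(2)[of "x - y"] wt1[of "x - y"] B(1)
            by (smt (verit) mult_left_le)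
          thus "norm (f (x - y) * g y) \<le> norm (B * \<bar>g y\<bar>)"
            using B by (simp add: abs_mult mult_right_mono)
        qed
        thus ?thesis using summable_on_iff_abs_summable_on_real[of "\<lambda>y. f (x - y) * g y" UNIV] by simp
      qed
      have hsum: "h summable_on UNIV"
      proof -
        have "(\<lambda>y. R powr \<alpha> * (f (x - y) * g y) + (- A) * g y) summable_on UNIV"
          by (intro summable_on_add summable_on_cmult_right fxg gsum)
        thus ?thesis unfolding h_def by (simp add: algebra_simps)
      qed
      have heq: "R powr \<alpha> * lconv f g x - A * S = infsum h UNIV"
      proof -
        have "infsum h UNIV = infsum (\<lambda>y. R powr \<alpha> * (f (x - y) * g y) + (- A) * g y) UNIV"
          unfolding h_def by (rule infsum_cong) (simp add: algebra_simps)
        also have "\<dots> = infsum (\<lambda>y. R powr \<alpha> * (f (x - y) * g y)) UNIV + infsum (\<lambda>y. (- A) * g y) UNIV"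
          by (intro infsum_add summable_on_cmult_right fxg gsum)
        also have "\<dots> = R powr \<alpha> * lconv f g x - A * S"
        proof -
          have "infsum (\<lambda>y. R powr \<alpha> * (f (x - y) * g y)) UNIV = R powr \<alpha> * infsum (\<lambda>y. f (x - y) * g y) UNIV"
            by (rule infsum_cmult_right) (use fxg in auto)
          moreover have "infsum (\<lambda>y. (- A) * g y) UNIV = (- A) * infsum g UNIV"
            by (rule infsum_cmult_right) (use gsum in auto)
          ultimately show ?thesis by (simp add: lconv_def S_def R_def)
        qed
        finally show ?thesis by simp
      qed
      define u1 where "u1 = (\<lambda>y. 3 * A * e * \<bar>g y\<bar>)"
      define u2 where "u2 = (\<lambda>y. if \<delta> * R < lnorm y then c2 * \<bar>g y\<bar> else 0)"
      define u3 where "u3 = (\<lambda>y. if lnorm (x - y) < \<delta> * R then (R powr (\<alpha> - d) * K * 2 powr d * B) * wt \<alpha> (x - y) else 0)"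
      have pt: "\<bar>h y\<bar> \<le> u1 y + u2 y + u3 y" for y
        unfolding h_def u1_def u2_def u3_def c2_def abs_mult d_def
        by (rule pointwise[OF a A K B(1) e0(1) e0(2) dl(1) dl(2) pw1 pw2 B(2) R1(2) gb Rx R2 R3(1) R1(1)])
      have s1: "u1 summable_on UNIV" unfolding u1_def by (rule summable_on_cmult_right[OF gabs])
      have s2: "u2 summable_on UNIV" unfolding u2_def by (rule u2_sum(1)[OF gabs])
      have s3: "u3 summable_on UNIV" unfolding u3_def by (rule u3_sum(1))
      have habs: "(\<lambda>y. \<bar>h y\<bar>) summable_on UNIV"
        using hsum summable_on_iff_abs_summable_on_real[of h UNIV] by simp
      have "\<bar>infsum h UNIV\<bar> \<le> infsum (\<lambda>y. \<bar>h y\<bar>) UNIV"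
        using norm_infsum_bound[of h UNIV] habs by simp
      also have "\<dots> \<le> infsum (\<lambda>y. u1 y + u2 y + u3 y) UNIV"
        by (rule infsum_mono[OF habs]) (use s1 s2 s3 pt in \<open>auto intro: summable_on_add\<close>)
      also have "\<dots> = infsum u1 UNIV + infsum u2 UNIV + infsum u3 UNIV"
        by (simp add: infsum_add s1 s2 s3 summable_on_add)
      also have "infsum u1 UNIV = 3 * A * e * K"
        unfolding u1_def by (subst infsum_cmult_right) (use gabs gK in auto)
      also have "infsum u2 UNIV \<le> e"
      proof -
        have "infsum u2 UNIV = c2 * infsum (\<lambda>y. \<bar>g y\<bar>) {y. \<delta> * R < lnorm y}"
          unfolding u2_def by (rule u2_sum(2)[OF gabs])
        also have "\<dots> \<le> c2 * (e / c2)" using T[OF R3(2)] c2 by (intro mult_left_mono) auto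
        also have "\<dots> = e" using c2 by simp
        finally show ?thesis .
      qed
      also have "infsum u3 UNIV \<le> e"
      proof -
        have "infsum u3 UNIV = (R powr (\<alpha> - d) * K * 2 powr d * B) * (\<Sum>z\<in>{z :: int ^ 'd. lnorm z < \<delta> * R}. wt \<alpha> z)"
          unfolding u3_def by (rule u3_sum(2))
        also have "\<dots> \<le> (R powr (\<alpha> - d) * K * 2 powr d * B) * (C * (\<delta> * R) powr (d - \<alpha>))"
          by (intro mult_left_mono) (use count_bound[OF a ad R3(1)] K B in \<open>auto simp: C_def d_def\<close>)
        also have "\<dots> = (K * 2 powr d * B * C) * \<delta> powr (d - \<alpha>) * (R powr (\<alpha> - d) * R powr (d - \<alpha>))"
          using dl R0' by (simp add: powr_mult)
        also have "R powr (\<alpha> - d) * R powr (d - \<alpha>) = 1"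
          using R0' by (simp add: powr_add[symmetric])
        finally show ?thesis using dC by simp
      qed
      finally have "\<bar>infsum h UNIV\<bar> \<le> 3 * A * e * K + e + e" by simp
      also have "\<dots> = (3 * A * K + 2) * e" by (simp add: algebra_simps)
      finally have "\<bar>infsum h UNIV\<bar> < \<epsilon>" using eps by linarith
      thus "dist (lnorm x powr \<alpha> * lconv f g x) (A * S) < \<epsilon>"
        using heq by (simp add: dist_real_def R_def)
    qed
    thus "eventually (\<lambda>x. dist (lnorm x powr \<alpha> * lconv f g x) (A * S) < \<epsilon>) at_infty_lat"
      unfolding ev_lat by blast
  qed
qed

end
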